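(* Let $X\in\mathbb{R}^d$ be a random vector with mean $\theta_0$ and covariance matrix $\Sigma_0$, and assume (A1): $\Sigma_0$ is a finite covariance matrix of full rank $d$. Let $X_1,\dots,X_n$ ($n>d$) be independent copies of $X$, let $\Theta_n$ be the interior of the convex hull of $X_1,\dots,X_n$, let $\tilde\theta=\frac1n\sum_{i=1}^n X_i$ be the sample mean, and let $l(\theta)$ be the empirical log-likelihood ratio for the mean (defined in the context). Define the composite similarity mapping $h_n^C:\Theta_n\to\mathbb{R}^d$ by $$h_n^C(\theta)=\tilde\theta+\gamma\bigl(n,l(\theta)\bigr)(\theta-\tilde\theta),\qquad \gamma\bigl(n,l(\theta)\bigr)=1+\frac{l(\theta)}{2n},\qquad \theta\in\Theta_n.$$ Then: (i) $h_n^C$ has a unique fixed point, namely $\tilde\theta$; (ii) for each $\tau\ge 0$, the restriction of $h_n^C$ to the contour $c(\tau)=\{\theta\in\Theta_n: l(\theta)=\tau\}$ coincides with the similarity mapping $\theta\mapsto\tilde\theta+\gamma(n,\tau)(\theta-\tilde\theta)$ of $\mathbb{R}^d$ (with constant expansion factor $\gamma(n,\tau)=1+\tau/(2n)$); (iii) $h_n^C$ is a bijection from $\Theta_n$ onto $\mathbb{R}^d$.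
   Context: For $\theta\in\mathbb{R}^d$, the empirical likelihood ratio is $R(\theta)=\sup\{\prod_{i=1}^n nw_i : \sum_{i=1}^n w_i(X_i-\theta)=0,\ w_i\ge 0,\ \sum_{i=1}^n w_i=1\}$ (with $R(\theta)=0$ if the constraint set is empty or only allows zero products), and $l(\theta)=-2\log R(\theta)$; one has $0<R(\theta)\le1$ iff $\theta\in\Theta_n$, so $l$ is finite exactly on $\Theta_n$, and $l(\tilde\theta)=0$. Standing convention: whenever (A1) is assumed it is also understood that the convex hull of $X_1,\dots,X_n$ is nondegenerate (i.e. $\Theta_n$ is a nonempty open set), which holds with probability one under (A1) and $n>d$. *)

theory Defs
  imports "HOL-Analysis.Analysis"
begin

text \<open>Sample X 0, ..., X (n-1) in a Euclidean space (the paper's X_1..X_n).\<close>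

definition EL_weights :: "(nat \<Rightarrow> 'a::euclidean_space) \<Rightarrow> nat \<Rightarrow> 'a \<Rightarrow> (nat \<Rightarrow> real) set" where
  "EL_weights X n \<theta> = {w. (\<forall>i<n. 0 \<le> w i) \<and> (\<Sum>i<n. w i) = 1 \<and> (\<Sum>i<n. w i *\<^sub>R (X i - \<theta>)) = 0}"

definition EL_ratio :: "(nat \<Rightarrow> 'a::euclidean_space) \<Rightarrow> nat \<Rightarrow> 'a \<Rightarrow> real" where
  "EL_ratio X n \<theta> =
     (if EL_weights X n \<theta> = {} then 0
      else Sup ((\<lambda>w. \<Prod>i<n. real n * w i) ` EL_weights X n \<theta>))"

definition EL_logratio :: "(nat \<Rightarrow> 'a::euclidean_space) \<Rightarrow> nat \<Rightarrow> 'a \<Rightarrow> real" where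
  "EL_logratio X n \<theta> = - 2 * ln (EL_ratio X n \<theta>)"

definition Theta_n :: "(nat \<Rightarrow> 'a::euclidean_space) \<Rightarrow> nat \<Rightarrow> 'a set" where
  "Theta_n X n = interior (convex hull (X ` {..<n}))"

definition sample_mean :: "(nat \<Rightarrow> 'a::euclidean_space) \<Rightarrow> nat \<Rightarrow> 'a" where
  "sample_mean X n = (1 / real n) *\<^sub>R (\<Sum>i<n. X i)"

definition gamma_EL :: "nat \<Rightarrow> real \<Rightarrow> real" where
  "gamma_EL n t = 1 + t / (2 * real n)"

definition hC :: "(nat \<Rightarrow> 'a::euclidean_space) \<Rightarrow> nat \<Rightarrow> 'a \<Rightarrow> 'a" where
  "hC X n \<theta> = sample_mean X n + gamma_EL n (EL_logratio X n \<theta>) *\<^sub>R (\<theta> - sample_mean X n)"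

end

theory Submission
  imports Defs
begin



lemma weights_iff:
  "w \<in> EL_weights X n \<theta> \<longleftrightarrow> (\<forall>i<n. 0 \<le> w i) \<and> (\<Sum>i<n. w i) = 1 \<and> (\<Sum>i<n. w i *\<^sub>R X i) = \<theta>"
proof -
  have e: "(\<Sum>i<n. w i *\<^sub>R (X i - \<theta>)) = (\<Sum>i<n. w i *\<^sub>R X i) - (\<Sum>i<n. w i) *\<^sub>R \<theta>"
    by (simp add: scaleR_diff_right sum_subtractf scaleR_sum_left)
  show ?thesis unfolding EL_weights_def using e by auto
qed

lemma hull_char:
  fixes X :: "nat \<Rightarrow> 'a::euclidean_space"
  assumes "n > 0"
  shows "convex hull (X ` {..<n}) = {y. \<exists>w. (\<forall>i<n. 0 \<le> w i) \<and> (\<Sum>i<n. w i) = 1 \<and> (\<Sum>i<n. w i *\<^sub>R X i) = y}"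
    (is "_ = ?H")
proof
  have cv: "convex ?H"
    unfolding convex_def
  proof (intro allI impI ballI)
    fix x y and u v :: real
    assume x: "x \<in> ?H" and y: "y \<in> ?H" and uv: "0 \<le> u" "0 \<le> v" "u + v = 1"
    then obtain w1 w2 where w1: "\<forall>i<n. 0 \<le> w1 i" "(\<Sum>i<n. w1 i) = 1" "(\<Sum>i<n. w1 i *\<^sub>R X i) = x"
      and w2: "\<forall>i<n. 0 \<le> w2 i" "(\<Sum>i<n. w2 i) = 1" "(\<Sum>i<n. w2 i *\<^sub>R X i) = y" by blast
    let ?w = "\<lambda>i. u * w1 i + v * w2 i"
    have A1: "\<forall>i<n. 0 \<le> ?w i" using w1 w2 uv by simp
    have A2: "(\<Sum>i<n. ?w i) = 1" using w1 w2 uv by (simp add: sum.distrib sum_distrib_left[symmetric])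
    have A3: "(\<Sum>i<n. ?w i *\<^sub>R X i) = u *\<^sub>R x + v *\<^sub>R y"
    proof -
      have a: "(\<Sum>i<n. (u * w1 i) *\<^sub>R X i) = u *\<^sub>R (\<Sum>i<n. w1 i *\<^sub>R X i)" by (simp add: scaleR_sum_right)
      have b: "(\<Sum>i<n. (v * w2 i) *\<^sub>R X i) = v *\<^sub>R (\<Sum>i<n. w2 i *\<^sub>R X i)" by (simp add: scaleR_sum_right)
      show ?thesis using w1 w2 a b by (simp add: scaleR_add_left sum.distrib)
    qed
    show "u *\<^sub>R x + v *\<^sub>R y \<in> ?H" by (intro CollectI exI[of _ ?w] conjI A1 A2 A3)
  qed
  have sub: "X ` {..<n} \<subseteq> ?H"
  proof
    fix y assume "y \<in> X ` {..<n}"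
    then obtain j where j: "j < n" "y = X j" by auto
    let ?w = "\<lambda>i. if i = j then 1 else (0::real)"
    have B2: "(\<Sum>i<n. ?w i) = 1" using j by (simp add: sum.delta)
    have "(\<Sum>i<n. ?w i *\<^sub>R X i) = (\<Sum>i<n. if i = j then X i else 0)"
      by (rule sum.cong) auto
    also have "\<dots> = y" using j by (simp add: sum.delta)
    finally have B3: "(\<Sum>i<n. ?w i *\<^sub>R X i) = y" .
    have B1: "\<forall>i<n. 0 \<le> ?w i" by simp
    show "y \<in> ?H" by (intro CollectI exI[of _ ?w] conjI B1 B2 B3)
  qed
  show "convex hull (X ` {..<n}) \<subseteq> ?H" using cv sub by (simp add: hull_minimal)
  show "?H \<subseteq> convex hull (X ` {..<n})"
  proof
    fix y assume "y \<in> ?H"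
    then obtain w where w: "\<forall>i<n. 0 \<le> w i" "(\<Sum>i<n. w i) = 1" "(\<Sum>i<n. w i *\<^sub>R X i) = y" by blast
    have "(\<Sum>i\<in>{..<n}. w i *\<^sub>R X i) \<in> convex hull (X ` {..<n})"
      by (rule convex_sum) (use w in \<open>auto intro: hull_inc\<close>)
    then show "y \<in> convex hull (X ` {..<n})" using w by simp
  qed
qed


lemma ln_bound_sq:
  fixes x N \<eta> :: real
  assumes "0 < x" "x \<le> N" "\<eta> \<le> \<bar>x - 1\<bar>" "0 \<le> \<eta>"
  shows "ln x \<le> x - 1 - \<eta>^2 / (sqrt N + 1)^2"
proof -
  define s where "s = sqrt x"
  define K where "K = sqrt N + 1"
  have sx: "s > 0" using assms unfolding s_def by simp
  have ss: "s * s = x" using assms unfolding s_def by simp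
  have "ln x = 2 * ln s" using assms unfolding s_def by (simp add: ln_sqrt)
  also have "\<dots> \<le> 2 * (s - 1)" using ln_le_minus_one[OF sx] by simp
  finally have l1: "ln x \<le> 2 * (s - 1)" .
  have q: "(s - 1)^2 = s * s - 2 * s + 1" by (simp add: power2_eq_square algebra_simps)
  have e1: "x - 1 - 2 * (s - 1) = (s - 1)^2" unfolding ss[symmetric] q by (simp add: algebra_simps)
  have q2: "(s - 1) * (s + 1) = s * s - 1" by (simp add: algebra_simps)
  have e2: "x - 1 = (s - 1) * (s + 1)" unfolding ss[symmetric] q2 by simp
  have sN: "s \<le> sqrt N" using assms unfolding s_def by simp
  have K: "K > 0" using sN sx unfolding K_def by linarith
  have "\<bar>x - 1\<bar> = \<bar>s - 1\<bar> * \<bar>s + 1\<bar>" unfolding e2 by (rule abs_mult)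
  also have "\<bar>s + 1\<bar> = s + 1" using sx by simp
  finally have "\<eta> \<le> \<bar>s - 1\<bar> * (s + 1)" using assms(3) by simp
  also have "\<dots> \<le> \<bar>s - 1\<bar> * K" using sN unfolding K_def by (intro mult_left_mono) auto
  finally have "\<eta>^2 \<le> (\<bar>s - 1\<bar> * K)^2"
    using assms(4) by (intro power_mono) auto
  also have "(\<bar>s - 1\<bar> * K)^2 = (s - 1)^2 * K^2" by (simp only: power_mult_distrib power2_abs)
  finally have h: "\<eta>^2 \<le> (s - 1)^2 * K^2" .
  have K2: "K^2 > 0" using K by simp
  have "\<eta>^2 / K^2 \<le> (s - 1)^2" using h K2 by (simp only: pos_divide_le_eq)
  thus ?thesis using l1 e1 unfolding K_def by linarith
qed

lemma prod_strict:
  fixes X :: "nat \<Rightarrow> 'a::euclidean_space"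
  assumes w: "w \<in> EL_weights X n \<theta>" and j: "j < n" and eta: "0 \<le> \<eta>" "\<eta> \<le> \<bar>real n * w j - 1\<bar>"
  shows "(\<Prod>i<n. real n * w i) \<le> exp (- (\<eta>^2 / (sqrt (real n) + 1)^2))"
proof (cases "\<exists>i<n. w i = 0")
  case True
  then obtain i where "i < n" "w i = 0" by blast
  hence z: "(\<Prod>i<n. real n * w i) = 0" by (intro prod_zero) auto
  have "0 < exp (- (\<eta>^2 / (sqrt (real n) + 1)^2))" by (rule exp_gt_zero)
  thus ?thesis using z by linarith
next
  case False
  have ww: "\<forall>i<n. 0 \<le> w i" "(\<Sum>i<n. w i) = 1" using w by (auto simp: weights_iff)
  have pos: "\<forall>i<n. 0 < w i" using ww(1) False by (auto simp: order.order_iff_strict)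
  have wle: "w i \<le> 1" if "i < n" for i
  proof -
    have "w i \<le> (\<Sum>k<n. w k)" using that ww(1) by (intro member_le_sum) auto
    thus ?thesis using ww by simp
  qed
  define c where "c = \<eta>^2 / (sqrt (real n) + 1)^2"
  have npos: "real n > 0" using j by simp
  have each: "ln (real n * w i) \<le> real n * w i - 1 - (if i = j then c else 0)" if "i < n" for i
  proof (cases "i = j")
    case True
    have "real n * w i \<le> real n * 1" using wle[OF that] npos by (intro mult_left_mono) auto
    thus ?thesis using True ln_bound_sq[of "real n * w i" "real n" \<eta>] pos that eta npos
      unfolding c_def by simp
  next
    case False
    thus ?thesis using ln_le_minus_one[of "real n * w i"] pos that npos by simp
  qed
  have "ln (\<Prod>i<n. real n * w i) = (\<Sum>i<n. ln (real n * w i))"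
    using pos npos by (intro ln_prod) auto
  also have "\<dots> \<le> (\<Sum>i<n. real n * w i - 1 - (if i = j then c else 0))"
    using each by (intro sum_mono) auto
  also have "\<dots> = real n * (\<Sum>i<n. w i) - real n - c"
    using j by (simp add: sum_subtractf sum_distrib_left sum.delta)
  also have "\<dots> = - c" using ww by simp
  finally have "ln (\<Prod>i<n. real n * w i) \<le> - c" .
  moreover have P: "(\<Prod>i<n. real n * w i) > 0" using pos npos by (intro prod_pos) auto
  ultimately have "exp (ln (\<Prod>i<n. real n * w i)) \<le> exp (- c)" by (simp only: exp_le_cancel_iff)
  moreover have "exp (ln (\<Prod>i<n. real n * w i)) = (\<Prod>i<n. real n * w i)" using P by (rule exp_ln)
  ultimately show ?thesis unfolding c_def[symmetric] by linarith
qed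

lemma prod_bounds:
  fixes X :: "nat \<Rightarrow> 'a::euclidean_space"
  assumes w: "w \<in> EL_weights X n \<theta>"
  shows "0 \<le> (\<Prod>i<n. real n * w i)" "(\<Prod>i<n. real n * w i) \<le> 1"
proof -
  show "0 \<le> (\<Prod>i<n. real n * w i)" using w by (intro prod_nonneg) (auto simp: weights_iff)
  show "(\<Prod>i<n. real n * w i) \<le> 1"
  proof (cases "n = 0")
    case True thus ?thesis by simp
  next
    case False
    have "(\<Prod>i<n. real n * w i) \<le> exp (- ((0::real)^2 / (sqrt (real n) + 1)^2))"
      by (rule prod_strict[OF w, of 0 0]) (use False in auto)
    thus ?thesis by simp
  qed
qed

lemma R_upper:
  fixes X :: "nat \<Rightarrow> 'a::euclidean_space"
  assumes "w \<in> EL_weights X n \<theta>"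
  shows "(\<Prod>i<n. real n * w i) \<le> EL_ratio X n \<theta>"
proof -
  have "bdd_above ((\<lambda>w. \<Prod>i<n. real n * w i) ` EL_weights X n \<theta>)"
    by (rule bdd_aboveI[of _ 1]) (auto intro: prod_bounds(2))
  moreover have "EL_ratio X n \<theta> = Sup ((\<lambda>w. \<Prod>i<n. real n * w i) ` EL_weights X n \<theta>)"
    using assms by (auto simp: EL_ratio_def)
  ultimately show ?thesis using cSup_upper[OF imageI[OF assms]] by simp
qed

lemma R_le:
  fixes X :: "nat \<Rightarrow> 'a::euclidean_space"
  assumes "0 \<le> B" "\<And>w. w \<in> EL_weights X n \<theta> \<Longrightarrow> (\<Prod>i<n. real n * w i) \<le> B"
  shows "EL_ratio X n \<theta> \<le> B"
proof (cases "EL_weights X n \<theta> = {}")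
  case True thus ?thesis using assms by (simp add: EL_ratio_def)
next
  case False
  hence "EL_ratio X n \<theta> = Sup ((\<lambda>w. \<Prod>i<n. real n * w i) ` EL_weights X n \<theta>)"
    by (simp add: EL_ratio_def)
  also have "\<dots> \<le> B" using False assms(2) by (intro cSup_least) auto
  finally show ?thesis .
qed

lemma R_le1:
  fixes X :: "nat \<Rightarrow> 'a::euclidean_space"
  shows "EL_ratio X n \<theta> \<le> 1"
  using prod_bounds(2) by (intro R_le) auto

lemma R_ge0:
  fixes X :: "nat \<Rightarrow> 'a::euclidean_space"
  shows "0 \<le> EL_ratio X n \<theta>"
proof (cases "EL_weights X n \<theta> = {}")
  case True thus ?thesis by (simp add: EL_ratio_def)
next
  case False
  then obtain w where "w \<in> EL_weights X n \<theta>" by blast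
  thus ?thesis using prod_bounds(1) R_upper by (meson order.trans)
qed




lemma weights_mix:
  fixes X :: "nat \<Rightarrow> 'a::euclidean_space"
  assumes w1: "w1 \<in> EL_weights X n a" and w2: "w2 \<in> EL_weights X n b"
    and uv: "0 \<le> u" "0 \<le> v" "u + v = 1"
  shows "(\<lambda>i. u * w1 i + v * w2 i) \<in> EL_weights X n (u *\<^sub>R a + v *\<^sub>R b)"
proof -
  have w1': "\<forall>i<n. 0 \<le> w1 i" "(\<Sum>i<n. w1 i) = 1" "(\<Sum>i<n. w1 i *\<^sub>R X i) = a"
    using w1 by (auto simp: weights_iff)
  have w2': "\<forall>i<n. 0 \<le> w2 i" "(\<Sum>i<n. w2 i) = 1" "(\<Sum>i<n. w2 i *\<^sub>R X i) = b"
    using w2 by (auto simp: weights_iff)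
  have A1: "\<forall>i<n. 0 \<le> u * w1 i + v * w2 i" using w1' w2' uv by simp
  have A2: "(\<Sum>i<n. u * w1 i + v * w2 i) = 1" using w1' w2' uv
    by (simp add: sum.distrib sum_distrib_left[symmetric])
  have a: "(\<Sum>i<n. (u * w1 i) *\<^sub>R X i) = u *\<^sub>R (\<Sum>i<n. w1 i *\<^sub>R X i)" by (simp add: scaleR_sum_right)
  have b: "(\<Sum>i<n. (v * w2 i) *\<^sub>R X i) = v *\<^sub>R (\<Sum>i<n. w2 i *\<^sub>R X i)" by (simp add: scaleR_sum_right)
  have A3: "(\<Sum>i<n. (u * w1 i + v * w2 i) *\<^sub>R X i) = u *\<^sub>R a + v *\<^sub>R b"
    using w1' w2' a b by (simp add: scaleR_add_left sum.distrib)
  show ?thesis unfolding weights_iff using A1 A2 A3 by blast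
qed

lemma Rpow_le:
  fixes X :: "nat \<Rightarrow> 'a::euclidean_space"
  assumes u: "0 < u" and B: "0 \<le> B"
    and h: "\<And>w. w \<in> EL_weights X n \<theta> \<Longrightarrow> (\<Prod>i<n. real n * w i) powr u \<le> B"
  shows "EL_ratio X n \<theta> powr u \<le> B"
proof -
  have "EL_ratio X n \<theta> \<le> B powr (1 / u)"
  proof (rule R_le)
    show "0 \<le> B powr (1 / u)" by simp
    fix w assume w: "w \<in> EL_weights X n \<theta>"
    have P0: "0 \<le> (\<Prod>i<n. real n * w i)" using prod_bounds(1)[OF w] .
    have "(\<Prod>i<n. real n * w i) = ((\<Prod>i<n. real n * w i) powr u) powr (1 / u)"
      using P0 u by (simp add: powr_powr)
    also have "\<dots> \<le> B powr (1 / u)" using h[OF w] u by (intro powr_mono2) auto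
    finally show "(\<Prod>i<n. real n * w i) \<le> B powr (1 / u)" .
  qed
  hence "EL_ratio X n \<theta> powr u \<le> (B powr (1 / u)) powr u"
    using u R_ge0 by (intro powr_mono2) auto
  also have "\<dots> = B" using u B by (simp add: powr_powr)
  finally show ?thesis .
qed

lemma young0:
  fixes a b u v :: real
  assumes "0 < u" "0 < v" "u + v = 1" "0 \<le> a" "0 \<le> b"
  shows "a powr u * b powr v \<le> u * a + v * b"
proof (cases "a = 0 \<or> b = 0")
  case True thus ?thesis using assms by auto
next
  case False thus ?thesis using assms Youngs_inequality_0[of u v a b] by auto
qed

lemma R_concave:
  fixes X :: "nat \<Rightarrow> 'a::euclidean_space"
  assumes u: "0 < u" "0 < v" "u + v = 1"
  shows "EL_ratio X n a powr u * EL_ratio X n b powr v \<le> EL_ratio X n (u *\<^sub>R a + v *\<^sub>R b)"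
proof -
  define Rm where "Rm = EL_ratio X n (u *\<^sub>R a + v *\<^sub>R b)"
  have Rm0: "0 \<le> Rm" unfolding Rm_def by (rule R_ge0)
  have key: "(\<Prod>i<n. real n * w1 i) powr u * (\<Prod>i<n. real n * w2 i) powr v \<le> Rm"
    if w1: "w1 \<in> EL_weights X n a" and w2: "w2 \<in> EL_weights X n b" for w1 w2
  proof -
    have nn1: "0 \<le> w1 i" if "i < n" for i using w1 that by (auto simp: weights_iff)
    have nn2: "0 \<le> w2 i" if "i < n" for i using w2 that by (auto simp: weights_iff)
    have "(\<Prod>i<n. real n * w1 i) powr u * (\<Prod>i<n. real n * w2 i) powr v
        = (\<Prod>i<n. (real n * w1 i) powr u * (real n * w2 i) powr v)"
      unfolding prod_powr_distrib by (rule prod.distrib[symmetric])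
    also have "\<dots> \<le> (\<Prod>i<n. real n * (u * w1 i + v * w2 i))"
    proof (rule prod_mono)
      fix i assume "i \<in> {..<n}"
      hence "0 \<le> w1 i" "0 \<le> w2 i" using nn1 nn2 by auto
      hence "(real n * w1 i) powr u * (real n * w2 i) powr v \<le> u * (real n * w1 i) + v * (real n * w2 i)"
        using u by (intro young0) auto
      also have "\<dots> = real n * (u * w1 i + v * w2 i)" by (simp add: algebra_simps)
      finally show "0 \<le> (real n * w1 i) powr u * (real n * w2 i) powr v \<and>
          (real n * w1 i) powr u * (real n * w2 i) powr v \<le> real n * (u * w1 i + v * w2 i)" by simp
    qed
    also have "\<dots> \<le> Rm" unfolding Rm_def
      using R_upper[OF weights_mix[OF w1 w2, of u v]] u by simp
    finally show ?thesis .
  qed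
  have step1: "EL_ratio X n a powr u * (\<Prod>i<n. real n * w2 i) powr v \<le> Rm"
    if w2: "w2 \<in> EL_weights X n b" for w2
  proof (cases "(\<Prod>i<n. real n * w2 i) powr v = 0")
    case True show ?thesis by (simp only: True mult_zero_right Rm0)
  next
    case False
    hence Q: "(\<Prod>i<n. real n * w2 i) powr v > 0" by simp
    have "EL_ratio X n a powr u \<le> Rm / (\<Prod>i<n. real n * w2 i) powr v"
    proof (rule Rpow_le)
      show "0 < u" using u by simp
      show "0 \<le> Rm / (\<Prod>i<n. real n * w2 i) powr v" using Rm0 Q by simp
      fix w1 assume "w1 \<in> EL_weights X n a"
      from key[OF this w2] Q show "(\<Prod>i<n. real n * w1 i) powr u \<le> Rm / (\<Prod>i<n. real n * w2 i) powr v"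
        by (simp add: pos_le_divide_eq)
    qed
    thus ?thesis using Q by (simp add: pos_le_divide_eq)
  qed
  show ?thesis
  proof (cases "EL_ratio X n a powr u = 0")
    case True show ?thesis using Rm0 unfolding Rm_def by (simp only: True mult_zero_left)
  next
    case False
    hence Q: "EL_ratio X n a powr u > 0" by simp
    have "EL_ratio X n b powr v \<le> Rm / EL_ratio X n a powr u"
    proof (rule Rpow_le)
      show "0 < v" using u by simp
      show "0 \<le> Rm / EL_ratio X n a powr u" using Rm0 Q by simp
      fix w2 assume "w2 \<in> EL_weights X n b"
      from step1[OF this] Q show "(\<Prod>i<n. real n * w2 i) powr v \<le> Rm / EL_ratio X n a powr u"
        by (simp add: pos_le_divide_eq mult.commute)
    qed
    thus ?thesis using Q unfolding Rm_def by (simp add: pos_le_divide_eq mult.commute)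
  qed
qed




lemma sum_lin:
  fixes X :: "nat \<Rightarrow> 'a::real_vector"
  shows "(\<Sum>i<n. (c * f i - d * g i) *\<^sub>R X i) = c *\<^sub>R (\<Sum>i<n. f i *\<^sub>R X i) - d *\<^sub>R (\<Sum>i<n. g i *\<^sub>R X i)"
  by (simp add: scaleR_diff_left sum_subtractf scaleR_sum_right)

locale EL =
  fixes X :: "nat \<Rightarrow> 'a::euclidean_space" and n :: nat
  assumes npos: "0 < n" and ne: "Theta_n X n \<noteq> {}"
begin

abbreviation "H \<equiv> convex hull (X ` {..<n})"
abbreviation "Th \<equiv> Theta_n X n"
abbreviation "m \<equiv> sample_mean X n"
abbreviation "R \<equiv> EL_ratio X n"
abbreviation "l \<equiv> EL_logratio X n"

lemma Th_eq: "Th = interior H" by (simp add: Theta_n_def)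

lemma H_iff: "y \<in> H \<longleftrightarrow> EL_weights X n y \<noteq> {}"
proof -
  have "y \<in> H \<longleftrightarrow> (\<exists>w. (\<forall>i<n. 0 \<le> w i) \<and> (\<Sum>i<n. w i) = 1 \<and> (\<Sum>i<n. w i *\<^sub>R X i) = y)"
    by (simp add: hull_char[OF npos])
  also have "\<dots> \<longleftrightarrow> (\<exists>w. w \<in> EL_weights X n y)" by (simp only: weights_iff)
  finally show ?thesis by blast
qed

lemma convex_H: "convex H" by simp
lemma compact_H: "compact H" by (intro compact_convex_hull finite_imp_compact) auto
lemma closed_H: "closed H" using compact_H by (rule compact_imp_closed)
lemma open_Th: "open Th" by (simp add: Th_eq)
lemma convex_Th: "convex Th" by (simp add: Th_eq)
lemma Th_sub: "Th \<subseteq> H" by (simp add: Th_eq interior_subset)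

lemma unif: "(\<lambda>i. 1 / real n) \<in> EL_weights X n m"
proof -
  have "(\<Sum>i<n. (1 / real n) *\<^sub>R X i) = m" by (simp add: sample_mean_def scaleR_sum_right)
  moreover have "(\<Sum>i<n. 1 / real n) = 1" using npos by simp
  ultimately show ?thesis unfolding weights_iff by simp
qed

lemma R_m: "R m = 1"
proof -
  have "(\<Prod>i<n. real n * (1 / real n)) = 1" using npos by simp
  hence "1 \<le> R m" using R_upper[OF unif] by simp
  thus ?thesis using R_le1[of X n m] by simp
qed

lemma l_m: "l m = 0" by (simp add: EL_logratio_def R_m)

lemma w_le1: "w \<in> EL_weights X n \<theta> \<Longrightarrow> i < n \<Longrightarrow> w i \<le> 1"
proof -
  assume w: "w \<in> EL_weights X n \<theta>" and i: "i < n"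
  have ww: "\<forall>i<n. 0 \<le> w i" "(\<Sum>i<n. w i) = 1" using w by (auto simp: weights_iff)
  have "w i \<le> (\<Sum>k<n. w k)" using i ww(1) by (intro member_le_sum) auto
  thus ?thesis using ww by simp
qed

lemma m_in_Th: "m \<in> Th"
proof -
  obtain p where p: "p \<in> Th" using ne by blast
  hence "p \<in> H" using Th_sub by blast
  then obtain u where u: "u \<in> EL_weights X n p" using H_iff by blast
  define \<delta> where "\<delta> = 1 / real n"
  define q where "q = (1 + \<delta>) *\<^sub>R m - \<delta> *\<^sub>R p"
  define v where "v = (\<lambda>i. (1 + \<delta>) * (1 / real n) - \<delta> * u i)"
  have np: "real n > 0" using npos by simp
  have uu: "\<forall>i<n. 0 \<le> u i" "(\<Sum>i<n. u i) = 1" "(\<Sum>i<n. u i *\<^sub>R X i) = p"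
    using u by (auto simp: weights_iff)
  have mm: "(\<Sum>i<n. (1 / real n) *\<^sub>R X i) = m" by (simp add: sample_mean_def scaleR_sum_right)
  have v1: "\<forall>i<n. 0 \<le> v i"
  proof (intro allI impI)
    fix i assume i: "i < n"
    have "u i \<le> 1" using w_le1[OF u i] .
    hence "\<delta> * u i \<le> \<delta>" unfolding \<delta>_def using np by (simp add: divide_le_eq)
    moreover have "\<delta> \<le> (1 + \<delta>) * (1 / real n)" unfolding \<delta>_def using np by (simp add: field_simps)
    ultimately show "0 \<le> v i" unfolding v_def by linarith
  qed
  have v2: "(\<Sum>i<n. v i) = 1"
  proof -
    have "(\<Sum>i<n. v i) = (\<Sum>i<n. (1 + \<delta>) * (1 / real n)) - \<delta> * (\<Sum>i<n. u i)"
      unfolding v_def by (simp add: sum_subtractf sum_distrib_left)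
    also have "\<dots> = (1 + \<delta>) - \<delta>" using uu np by simp
    finally show ?thesis by simp
  qed
  have v3: "(\<Sum>i<n. v i *\<^sub>R X i) = q"
    unfolding v_def q_def sum_lin[of "1 + \<delta>" "\<lambda>i. 1 / real n" \<delta> u X n] mm uu(3) ..
  have "q \<in> H" unfolding H_iff weights_iff[symmetric] using v1 v2 v3 weights_iff by blast
  define e where "e = 1 / (real n + 1)"
  have e: "0 < e" "e \<le> 1" unfolding e_def using np by auto
  have "q - e *\<^sub>R (q - p) \<in> interior H"
    using mem_interior_convex_shrink[OF convex_H _ \<open>q \<in> H\<close> e] p by (simp add: Th_eq)
  moreover have "q - e *\<^sub>R (q - p) = m"
  proof -
    have nn0: "0 < real n * real n" using np by simp
    have nn: "real n + real n * real n \<noteq> 0" "real n * real n + real n \<noteq> 0" using np nn0 by linarith+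
    have c1: "(1 - e) * (1 + \<delta>) = 1" unfolding e_def \<delta>_def using np nn by (simp add: field_simps)
    have c2: "(1 - e) * \<delta> = e" unfolding e_def \<delta>_def using np nn by (simp add: field_simps)
    have "q - e *\<^sub>R (q - p) = (1 - e) *\<^sub>R q + e *\<^sub>R p" by (simp add: algebra_simps)
    also have "(1 - e) *\<^sub>R q = ((1 - e) * (1 + \<delta>)) *\<^sub>R m - ((1 - e) * \<delta>) *\<^sub>R p"
      unfolding q_def by (simp only: scaleR_diff_right scaleR_scaleR)
    finally show ?thesis unfolding c1 c2 by simp
  qed
  ultimately show ?thesis by (simp add: Th_eq)
qed

lemma R_pos: assumes th: "\<theta> \<in> Th" shows "R \<theta> > 0"
proof (cases "\<theta> = m")
  case True thus ?thesis by (simp add: R_m)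
next
  case False
  obtain r where r: "r > 0" "ball \<theta> r \<subseteq> H" using th by (auto simp: Th_eq mem_interior)
  define \<delta> where "\<delta> = r / (2 * norm (\<theta> - m))"
  have nz: "norm (\<theta> - m) > 0" using False by simp
  have d0: "\<delta> > 0" unfolding \<delta>_def using r nz by simp
  define \<theta>' where "\<theta>' = \<theta> + \<delta> *\<^sub>R (\<theta> - m)"
  have "dist \<theta> \<theta>' = \<delta> * norm (\<theta> - m)" unfolding \<theta>'_def dist_norm using d0 by simp
  also have "\<dots> = r / 2" unfolding \<delta>_def using nz by simp
  finally have "\<theta>' \<in> ball \<theta> r" using r by simp
  hence "\<theta>' \<in> H" using r by blast
  then obtain w' where w': "w' \<in> EL_weights X n \<theta>'" using H_iff by blast
  define a where "a = 1 / (1 + \<delta>)"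
  define b where "b = \<delta> / (1 + \<delta>)"
  have ab: "0 \<le> a" "0 \<le> b" "a + b = 1" "0 < b" unfolding a_def b_def using d0 by (auto simp: field_simps)
  have wm: "(\<lambda>i. a * w' i + b * (1 / real n)) \<in> EL_weights X n (a *\<^sub>R \<theta>' + b *\<^sub>R m)"
    by (rule weights_mix[OF w' unif ab(1-3)])
  have "a *\<^sub>R \<theta>' + b *\<^sub>R m = \<theta>"
  proof -
    have c1: "a * (1 + \<delta>) = 1" "a * \<delta> = b" unfolding a_def b_def using d0 by (auto simp: field_simps)
    have "\<theta>' = (1 + \<delta>) *\<^sub>R \<theta> - \<delta> *\<^sub>R m" unfolding \<theta>'_def by (simp add: algebra_simps)
    hence "a *\<^sub>R \<theta>' = (a * (1 + \<delta>)) *\<^sub>R \<theta> - (a * \<delta>) *\<^sub>R m" by (simp only: scaleR_diff_right scaleR_scaleR)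
    thus ?thesis unfolding c1 by simp
  qed
  with wm have wm': "(\<lambda>i. a * w' i + b * (1 / real n)) \<in> EL_weights X n \<theta>" by simp
  have pos: "0 < real n * (a * w' i + b * (1 / real n))" if "i < n" for i
  proof -
    have "0 \<le> w' i" using w' that by (auto simp: weights_iff)
    moreover have "0 < b * (1 / real n)" using ab npos by simp
    ultimately have "0 < a * w' i + b * (1 / real n)" using ab by (simp add: add_nonneg_pos)
    thus ?thesis using npos by simp
  qed
  have "0 < (\<Prod>i<n. real n * (a * w' i + b * (1 / real n)))" using pos by (intro prod_pos) auto
  also have "\<dots> \<le> R \<theta>" by (rule R_upper[OF wm'])
  finally show ?thesis .
qed

lemma l_nonneg: "\<theta> \<in> Th \<Longrightarrow> 0 \<le> l \<theta>"
  using R_pos[of \<theta>] R_le1[of X n \<theta>] by (simp add: EL_logratio_def)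

lemma convex_l: "convex_on Th l"
proof (rule convex_onI)
  show "convex Th" by (rule convex_Th)
  fix t :: real and x y assume t: "0 < t" "t < 1" and x: "x \<in> Th" and y: "y \<in> Th"
  have Rx: "R x > 0" and Ry: "R y > 0" using R_pos x y by auto
  have "R x powr (1 - t) * R y powr t \<le> R ((1 - t) *\<^sub>R x + t *\<^sub>R y)"
    using t by (intro R_concave) auto
  moreover have "0 < R x powr (1 - t) * R y powr t" using Rx Ry by simp
  ultimately have "ln (R x powr (1 - t) * R y powr t) \<le> ln (R ((1 - t) *\<^sub>R x + t *\<^sub>R y))"
    by simp
  moreover have "ln (R x powr (1 - t) * R y powr t) = (1 - t) * ln (R x) + t * ln (R y)"
    using Rx Ry by (simp add: ln_mult)
  ultimately show "l ((1 - t) *\<^sub>R x + t *\<^sub>R y) \<le> (1 - t) * l x + t * l y"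
    unfolding EL_logratio_def by (simp add: algebra_simps)
qed

lemma cont_l: "continuous_on Th l"
  by (rule convex_on_continuous[OF open_Th convex_l])

lemma l_ray: assumes th: "\<theta> \<in> Th" and s: "0 \<le> s" "s \<le> 1"
  shows "m + s *\<^sub>R (\<theta> - m) \<in> Th" "l (m + s *\<^sub>R (\<theta> - m)) \<le> s * l \<theta>"
proof -
  have eq: "m + s *\<^sub>R (\<theta> - m) = (1 - s) *\<^sub>R m + s *\<^sub>R \<theta>" by (simp add: algebra_simps)
  show "m + s *\<^sub>R (\<theta> - m) \<in> Th" unfolding eq
    using convex_Th m_in_Th th s unfolding convex_def by auto
  show "l (m + s *\<^sub>R (\<theta> - m)) \<le> s * l \<theta>" unfolding eq
    using convex_onD[OF convex_l, of s m \<theta>] s m_in_Th th l_m by simp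
qed

end




context EL begin

lemma R_lt1: assumes th: "\<theta> \<in> H" and ne: "\<theta> \<noteq> m" shows "R \<theta> < 1"
proof -
  define d where "d = \<theta> - m"
  have dd: "d \<bullet> d > 0" using ne unfolding d_def by simp
  define M where "M = (\<Sum>i<n. \<bar>d \<bullet> X i\<bar>) + 1"
  have M: "M > 0" unfolding M_def by (simp add: add_nonneg_pos sum_nonneg)
  define \<eta>0 where "\<eta>0 = (d \<bullet> d) / M"
  have e0: "\<eta>0 > 0" unfolding \<eta>0_def using dd M by simp
  have np: "real n > 0" using npos by simp
  define c where "c = (real n * \<eta>0)^2 / (sqrt (real n) + 1)^2"
  have bound: "(\<Prod>i<n. real n * w i) \<le> exp (- c)" if w: "w \<in> EL_weights X n \<theta>" for w
  proof -
    have ww: "\<forall>i<n. 0 \<le> w i" "(\<Sum>i<n. w i) = 1" "(\<Sum>i<n. w i *\<^sub>R X i) = \<theta>"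
      using w by (auto simp: weights_iff)
    have S1': "d \<bullet> \<theta> = (\<Sum>i<n. w i * (d \<bullet> X i))"
      unfolding ww(3)[symmetric] by (simp add: inner_sum_right)
    have S1: "(\<Sum>i<n. w i * (d \<bullet> X i)) = d \<bullet> \<theta>" using S1' by simp
    have S2: "(\<Sum>i<n. (1 / real n) * (d \<bullet> X i)) = d \<bullet> m"
      by (simp add: sample_mean_def inner_sum_right sum_distrib_left)
    have S: "(\<Sum>i<n. (w i - 1 / real n) * (d \<bullet> X i)) = d \<bullet> d"
    proof -
      have "(\<Sum>i<n. (w i - 1 / real n) * (d \<bullet> X i)) = (\<Sum>i<n. w i * (d \<bullet> X i)) - (\<Sum>i<n. (1 / real n) * (d \<bullet> X i))"
        by (simp add: left_diff_distrib sum_subtractf)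
      also have "\<dots> = d \<bullet> \<theta> - d \<bullet> m" using S1 S2 by simp
      also have "\<dots> = d \<bullet> d" unfolding d_def by (simp add: inner_diff_right)
      finally show ?thesis .
    qed
    have "\<exists>j<n. \<eta>0 \<le> \<bar>w j - 1 / real n\<bar>"
    proof (rule ccontr)
      assume "\<not> ?thesis"
      hence lt: "\<forall>j<n. \<bar>w j - 1 / real n\<bar> < \<eta>0" by auto
      have "d \<bullet> d \<le> (\<Sum>i<n. \<eta>0 * \<bar>d \<bullet> X i\<bar>)"
        unfolding S[symmetric]
      proof (rule sum_mono)
        fix i assume "i \<in> {..<n}"
        hence "\<bar>w i - 1 / real n\<bar> \<le> \<eta>0" using lt by auto
        hence "\<bar>w i - 1 / real n\<bar> * \<bar>d \<bullet> X i\<bar> \<le> \<eta>0 * \<bar>d \<bullet> X i\<bar>" by (intro mult_right_mono) auto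
        moreover have "(w i - 1 / real n) * (d \<bullet> X i) \<le> \<bar>w i - 1 / real n\<bar> * \<bar>d \<bullet> X i\<bar>"
          by (simp add: abs_mult[symmetric])
        ultimately show "(w i - 1 / real n) * (d \<bullet> X i) \<le> \<eta>0 * \<bar>d \<bullet> X i\<bar>" by linarith
      qed
      also have "\<dots> = \<eta>0 * (M - 1)" unfolding M_def by (simp add: sum_distrib_left)
      also have "\<dots> < \<eta>0 * M" using e0 by simp
      also have "\<dots> = d \<bullet> d" unfolding \<eta>0_def using M by simp
      finally show False by simp
    qed
    then obtain j where j: "j < n" "\<eta>0 \<le> \<bar>w j - 1 / real n\<bar>" by blast
    have "real n * w j - 1 = real n * (w j - 1 / real n)" using np by (simp add: algebra_simps)
    hence "\<bar>real n * w j - 1\<bar> = real n * \<bar>w j - 1 / real n\<bar>" using np by (simp add: abs_mult)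
    hence "real n * \<eta>0 \<le> \<bar>real n * w j - 1\<bar>" using j np by simp
    thus ?thesis unfolding c_def using prod_strict[OF w j(1), of "real n * \<eta>0"] e0 np by simp
  qed
  have "R \<theta> \<le> exp (- c)" by (rule R_le) (use bound in auto)
  also have "exp (- c) < 1"
  proof -
    have "(sqrt (real n) + 1)^2 > 0" proof - have "sqrt (real n) + 1 > 0" using np by (simp add: add_nonneg_pos) thus ?thesis by simp qed
    moreover have "(real n * \<eta>0)^2 > 0" using np e0 by simp
    ultimately have "c > 0" unfolding c_def by simp
    thus ?thesis by simp
  qed
  finally show ?thesis .
qed

lemma boundary:
  assumes p: "p \<in> H" "p \<notin> Th"
  obtains a C where "0 \<le> C" "\<forall>x\<in>H. a \<bullet> p \<le> a \<bullet> x"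
    "\<forall>\<theta>\<in>Th. R \<theta> \<le> C * (a \<bullet> \<theta> - a \<bullet> p)"
proof -
  have intne: "interior H \<noteq> {}" using m_in_Th by (auto simp: Th_eq)
  have ri: "rel_interior H = Th" using rel_interior_nonempty_interior[OF intne] by (simp add: Th_eq)
  have clH: "closure H = H" using closed_H by simp
  obtain a where a: "a \<noteq> 0" "\<And>y. y \<in> closure H \<Longrightarrow> a \<bullet> p \<le> a \<bullet> y"
      "\<And>y. y \<in> rel_interior H \<Longrightarrow> a \<bullet> p < a \<bullet> y"
    using supporting_hyperplane_relative_frontier[OF convex_H _ , of p] p clH ri by auto
  have aH: "\<And>y. y \<in> H \<Longrightarrow> a \<bullet> p \<le> a \<bullet> y" using a(2) clH by simp
  have am: "a \<bullet> p < a \<bullet> m" using a(3) m_in_Th ri by simp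
  have np: "real n > 0" using npos by simp
  have "\<exists>j<n. a \<bullet> p < a \<bullet> X j"
  proof (rule ccontr)
    assume "\<not> ?thesis"
    hence le: "\<forall>j<n. a \<bullet> X j \<le> a \<bullet> p" by auto
    have "a \<bullet> m = (1 / real n) * (\<Sum>j<n. a \<bullet> X j)" by (simp add: sample_mean_def inner_sum_right)
    also have "\<dots> \<le> (1 / real n) * (\<Sum>j<n. a \<bullet> p)" using le np
      by (intro mult_left_mono sum_mono) auto
    also have "\<dots> = a \<bullet> p" using np by simp
    finally show False using am by simp
  qed
  then obtain j where j: "j < n" "a \<bullet> p < a \<bullet> X j" by blast
  define c where "c = a \<bullet> X j - a \<bullet> p"
  have c: "c > 0" using j unfolding c_def by simp
  define C where "C = real n ^ (n + 1) / c"
  have C: "0 \<le> C" unfolding C_def using c by simp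
  have XH: "X i \<in> H" if "i < n" for i using that by (intro hull_inc) auto
  have main: "R \<theta> \<le> C * (a \<bullet> \<theta> - a \<bullet> p)" if th: "\<theta> \<in> Th" for \<theta>
  proof (rule R_le)
    have "\<theta> \<in> H" using th Th_sub by blast
    thus "0 \<le> C * (a \<bullet> \<theta> - a \<bullet> p)" using C aH by simp
    fix w assume w: "w \<in> EL_weights X n \<theta>"
    have ww: "\<forall>i<n. 0 \<le> w i" "(\<Sum>i<n. w i) = 1" "(\<Sum>i<n. w i *\<^sub>R X i) = \<theta>"
      using w by (auto simp: weights_iff)
    have sumeq: "(\<Sum>i<n. w i * (a \<bullet> X i - a \<bullet> p)) = a \<bullet> \<theta> - a \<bullet> p"
    proof -
      have "(\<Sum>i<n. w i * (a \<bullet> X i - a \<bullet> p)) = (\<Sum>i<n. w i * (a \<bullet> X i)) - (\<Sum>i<n. w i) * (a \<bullet> p)"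
        by (simp add: right_diff_distrib sum_subtractf sum_distrib_right)
      also have "(\<Sum>i<n. w i * (a \<bullet> X i)) = a \<bullet> \<theta>"
      proof -
        have "a \<bullet> \<theta> = (\<Sum>i<n. w i * (a \<bullet> X i))"
          unfolding ww(3)[symmetric] by (simp add: inner_sum_right)
        thus ?thesis by simp
      qed
      finally show ?thesis using ww(2) by simp
    qed
    have "w j * c \<le> (\<Sum>i<n. w i * (a \<bullet> X i - a \<bullet> p))"
      unfolding c_def using j ww(1) aH XH by (intro member_le_sum) auto
    hence wj: "w j * c \<le> a \<bullet> \<theta> - a \<bullet> p" using sumeq by simp
    have wj0: "0 \<le> w j" using ww j by simp
    have rest: "(\<Prod>i\<in>{..<n} - {j}. real n * w i) \<le> real n ^ n"
    proof (rule prod_le_power)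
      fix i assume "i \<in> {..<n} - {j}"
      hence "0 \<le> w i" "w i \<le> 1" using ww w_le1[OF w] by auto
      thus "0 \<le> real n * w i \<and> real n * w i \<le> real n" using np by (simp add: mult_left_le)
    next
      have "card ({..<n} - {j}) \<le> card {..<n}" by (rule card_mono) auto
      thus "card ({..<n} - {j}) \<le> n" by simp
      show "1 \<le> real n" using npos by simp
    qed
    have "(\<Prod>i<n. real n * w i) = (real n * w j) * (\<Prod>i\<in>{..<n} - {j}. real n * w i)"
      using j by (simp add: prod.remove)
    also have "\<dots> \<le> (real n * w j) * real n ^ n"
      using rest wj0 np by (intro mult_left_mono) auto
    also have "\<dots> = C * (w j * c)" unfolding C_def using c by (simp add: field_simps)
    also have "\<dots> \<le> C * (a \<bullet> \<theta> - a \<bullet> p)" using wj C by (intro mult_left_mono) auto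
    finally show "(\<Prod>i<n. real n * w i) \<le> C * (a \<bullet> \<theta> - a \<bullet> p)" .
  qed
  show ?thesis by (rule that[OF C]) (use aH main in auto)
qed

end




context EL begin

lemma hC_eq: "hC X n \<theta> = m + gamma_EL n (l \<theta>) *\<^sub>R (\<theta> - m)" by (simp add: hC_def)

lemma gamma_ge1: "\<theta> \<in> Th \<Longrightarrow> 1 \<le> gamma_EL n (l \<theta>)"
  using l_nonneg[of \<theta>] npos by (simp add: gamma_EL_def)

lemma gamma_mono: "a \<le> b \<Longrightarrow> gamma_EL n a \<le> gamma_EL n b"
  using npos by (simp add: gamma_EL_def divide_right_mono)

lemma surj_hC: "\<exists>\<theta>\<in>Th. hC X n \<theta> = y"
proof (cases "y = m")
  case True thus ?thesis using m_in_Th by (intro bexI[of _ m]) (auto simp: hC_eq)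
next
  case False
  define v where "v = y - m"
  have nv: "norm v > 0" using False unfolding v_def by simp
  define S where "S = {t::real. 0 \<le> t \<and> m + t *\<^sub>R v \<in> Th}"
  have np: "real n > 0" using npos by simp
  obtain B where B: "\<forall>x\<in>H. norm x \<le> B" using compact_imp_bounded[OF compact_H] unfolding bounded_iff by blast
  have Sb: "t \<le> (B + norm m) / norm v" if "t \<in> S" for t
  proof -
    have t: "0 \<le> t" "m + t *\<^sub>R v \<in> H" using that Th_sub unfolding S_def by auto
    have "t * norm v = norm ((m + t *\<^sub>R v) - m)" using t by simp
    also have "\<dots> \<le> norm (m + t *\<^sub>R v) + norm m" by (rule norm_triangle_ineq4)
    also have "\<dots> \<le> B + norm m" using B t by auto
    finally show ?thesis using nv by (simp add: pos_le_divide_eq)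
  qed
  have bdd: "bdd_above S" using Sb by (intro bdd_aboveI) blast
  have S0: "0 \<in> S" unfolding S_def using m_in_Th by simp
  hence Sne: "S \<noteq> {}" by blast
  define T where "T = Sup S"
  obtain e where e: "e > 0" "ball m e \<subseteq> Th" using open_Th m_in_Th open_contains_ball by blast
  define t0 where "t0 = e / (2 * norm v)"
  have t0: "t0 > 0" unfolding t0_def using e nv by simp
  have "dist m (m + t0 *\<^sub>R v) = e / 2" unfolding t0_def dist_norm using nv e by simp
  hence "m + t0 *\<^sub>R v \<in> Th" using e by auto
  hence "t0 \<in> S" unfolding S_def using t0 by simp
  hence Tpos: "T > 0" unfolding T_def using cSup_upper[OF _ bdd] t0 by force
  have inS: "m + t *\<^sub>R v \<in> Th" if t: "0 \<le> t" "t < T" for t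
  proof -
    obtain t' where t': "t' \<in> S" "t < t'" using less_cSup_iff[OF Sne bdd] t unfolding T_def by blast
    have t'0: "t' > 0" using t t' by simp
    have th': "m + t' *\<^sub>R v \<in> Th" using t' unfolding S_def by simp
    have A: "m + (t / t') *\<^sub>R ((m + t' *\<^sub>R v) - m) \<in> Th"
      using l_ray(1)[OF th', of "t / t'"] t t' t'0 by simp
    have eqv: "m + (t / t') *\<^sub>R ((m + t' *\<^sub>R v) - m) = m + t *\<^sub>R v" using t'0 by simp
    show ?thesis using A unfolding eqv .
  qed
  define p where "p = m + T *\<^sub>R v"
  have pcl: "p \<in> closure Th"
    unfolding closure_approachable
  proof (intro allI impI)
    fix \<epsilon> :: real assume \<epsilon>: "\<epsilon> > 0"
    define t where "t = max 0 (T - \<epsilon> / (2 * norm v))"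
    have t: "0 \<le> t" "t < T" "T - t \<le> \<epsilon> / (2 * norm v)" unfolding t_def using Tpos \<epsilon> nv by auto
    have "dist (m + t *\<^sub>R v) p = (T - t) * norm v"
    proof -
      have "(m + t *\<^sub>R v) - p = (t - T) *\<^sub>R v" unfolding p_def by (simp add: algebra_simps)
      hence "dist (m + t *\<^sub>R v) p = \<bar>t - T\<bar> * norm v" by (simp add: dist_norm)
      thus ?thesis using t by simp
    qed
    also have "\<dots> \<le> \<epsilon> / (2 * norm v) * norm v" using t nv by (intro mult_right_mono) auto
    also have "\<dots> < \<epsilon>" using nv \<epsilon> by simp
    finally show "\<exists>y\<in>Th. dist y p < \<epsilon>" using inS[OF t(1,2)] by blast
  qed
  have pH: "p \<in> H" using pcl closure_mono[OF Th_sub] closed_H by (metis closure_closed subsetD)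
  have pTh: "p \<notin> Th"
  proof
    assume "p \<in> Th"
    then obtain e' where e': "e' > 0" "ball p e' \<subseteq> Th" using open_Th open_contains_ball by blast
    define t2 where "t2 = T + e' / (2 * norm v)"
    have "m + t2 *\<^sub>R v = p + (e' / (2 * norm v)) *\<^sub>R v" unfolding t2_def p_def by (simp add: algebra_simps)
    hence "dist p (m + t2 *\<^sub>R v) = e' / 2" using nv e' by (simp add: dist_norm)
    hence "m + t2 *\<^sub>R v \<in> Th" using e' by auto
    hence "t2 \<in> S" unfolding S_def t2_def using Tpos e' nv by simp
    hence "t2 \<le> T" unfolding T_def using cSup_upper[OF _ bdd] by blast
    moreover have "e' / (2 * norm v) > 0" using e' nv by simp
    ultimately show False using t2_def by linarith
  qed
  obtain a C where aC: "0 \<le> C" "\<forall>x\<in>H. a \<bullet> p \<le> a \<bullet> x"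
    "\<forall>\<theta>\<in>Th. R \<theta> \<le> C * (a \<bullet> \<theta> - a \<bullet> p)"
    by (rule boundary[OF pH pTh]) (rule that)
  define K where "K = \<bar>C * (a \<bullet> v)\<bar>"
  have K0: "K \<ge> 0" unfolding K_def by simp
  have Rbd: "R (m + t *\<^sub>R v) \<le> K * (T - t)" if t: "0 \<le> t" "t < T" for t
  proof -
    have eq: "C * (a \<bullet> (m + t *\<^sub>R v) - a \<bullet> p) = - (C * (a \<bullet> v)) * (T - t)"
      unfolding p_def by (simp add: inner_add_right algebra_simps)
    have "- (C * (a \<bullet> v)) * (T - t) \<le> K * (T - t)" unfolding K_def using t
      by (intro mult_right_mono) auto
    thus ?thesis using aC(3)[rule_format, OF inS[OF t]] eq by simp
  qed
  define t1 where "t1 = max (T / 2) (T - exp (- (2 * real n / T)) / (K + 1))"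
  have t1: "0 < t1" "t1 < T" "T / 2 \<le> t1" unfolding t1_def using Tpos K0 by auto
  have t1b: "T - t1 \<le> exp (- (2 * real n / T)) / (K + 1)" unfolding t1_def by simp
  define \<theta>1 where "\<theta>1 = m + t1 *\<^sub>R v"
  have th1: "\<theta>1 \<in> Th" unfolding \<theta>1_def using inS t1 by simp
  have "R \<theta>1 \<le> K * (T - t1)" unfolding \<theta>1_def using Rbd t1 by simp
  also have "\<dots> \<le> K * (exp (- (2 * real n / T)) / (K + 1))" using t1b K0 by (intro mult_left_mono) auto
  also have "\<dots> \<le> exp (- (2 * real n / T))"
  proof -
    have "K / (K + 1) \<le> 1" using K0 by simp
    hence "K / (K + 1) * exp (- (2 * real n / T)) \<le> 1 * exp (- (2 * real n / T))"
      by (intro mult_right_mono) auto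
    thus ?thesis by simp
  qed
  finally have R1: "R \<theta>1 \<le> exp (- (2 * real n / T))" .
  have R1p: "R \<theta>1 > 0" using R_pos[OF th1] .
  have "ln (R \<theta>1) \<le> ln (exp (- (2 * real n / T)))" using R1 R1p by (subst ln_le_cancel_iff) auto
  hence "ln (R \<theta>1) \<le> - (2 * real n / T)" by simp
  hence l1: "4 * real n / T \<le> l \<theta>1" unfolding EL_logratio_def by simp
  define g where "g = (\<lambda>t. t * gamma_EL n (l (m + t *\<^sub>R v)))"
  have "gamma_EL n (l \<theta>1) \<ge> 1 + 2 / T"
  proof -
    have "(4 * real n / T) / (2 * real n) = 2 / T" using np by (simp add: field_simps)
    moreover have "(4 * real n / T) / (2 * real n) \<le> l \<theta>1 / (2 * real n)" using l1 np by (intro divide_right_mono) auto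
    ultimately show ?thesis by (simp add: gamma_EL_def)
  qed
  hence "t1 * gamma_EL n (l \<theta>1) \<ge> t1 * (1 + 2 / T)" using t1 by (intro mult_left_mono) auto
  moreover have "t1 * (1 + 2 / T) \<ge> T / 2 * (1 + 2 / T)" using t1 Tpos by (intro mult_right_mono) auto
  moreover have "T / 2 * (1 + 2 / T) = T / 2 + 1" using Tpos by (simp add: field_simps)
  ultimately have "1 \<le> t1 * gamma_EL n (l \<theta>1)" using Tpos by linarith
  hence g1: "1 \<le> g t1" unfolding g_def \<theta>1_def by simp
  have g0: "g 0 \<le> 1" unfolding g_def by simp
  have cont: "continuous_on {0..t1} g"
  proof -
    have c1: "continuous_on {0..t1} (\<lambda>t. m + t *\<^sub>R v)" by (intro continuous_intros)
    have "(\<lambda>t. m + t *\<^sub>R v) ` {0..t1} \<subseteq> Th" using inS t1 by auto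
    hence "continuous_on {0..t1} (\<lambda>t. l (m + t *\<^sub>R v))"
      by (rule continuous_on_compose2[OF cont_l c1])
    thus ?thesis unfolding g_def gamma_EL_def using npos by (intro continuous_intros) auto
  qed
  obtain t where t: "0 \<le> t" "t \<le> t1" "g t = 1" using IVT'[of g 0 1 t1, OF g0 g1 _ cont] t1 by auto
  have th: "m + t *\<^sub>R v \<in> Th" using inS t t1 by simp
  have "hC X n (m + t *\<^sub>R v) = m + (t * gamma_EL n (l (m + t *\<^sub>R v))) *\<^sub>R v"
    by (simp add: hC_eq)
  also have "\<dots> = y" using t unfolding g_def v_def by simp
  finally show ?thesis using th by blast
qed

lemma inj_hC: "inj_on (hC X n) Th"
proof (rule inj_onI)
  fix x1 x2 assume x1: "x1 \<in> Th" and x2: "x2 \<in> Th" and eq: "hC X n x1 = hC X n x2"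
  define g1 where "g1 = gamma_EL n (l x1)"
  define g2 where "g2 = gamma_EL n (l x2)"
  have g: "1 \<le> g1" "1 \<le> g2" unfolding g1_def g2_def using gamma_ge1 x1 x2 by auto
  have E: "g1 *\<^sub>R (x1 - m) = g2 *\<^sub>R (x2 - m)" using eq unfolding g1_def g2_def by (simp add: hC_eq)
  define r where "r = g1 / g2"
  have r0: "r > 0" unfolding r_def using g by simp
  have d2: "x2 - m = r *\<^sub>R (x1 - m)"
  proof -
    have "x2 - m = (1 / g2) *\<^sub>R (g2 *\<^sub>R (x2 - m))" using g by simp
    also have "\<dots> = r *\<^sub>R (x1 - m)" unfolding E[symmetric] r_def by simp
    finally show ?thesis .
  qed
  have "r = 1"
  proof (cases "r \<le> 1")
    case True
    have "x2 = m + r *\<^sub>R (x1 - m)" using d2 by (simp add: algebra_simps)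
    hence "l x2 \<le> r * l x1" using l_ray(2)[OF x1, of r] r0 True by simp
    also have "\<dots> \<le> l x1" using True r0 l_nonneg[OF x1] by (simp add: mult_left_le_one_le)
    finally have "g2 \<le> g1" unfolding g1_def g2_def by (rule gamma_mono)
    hence "1 \<le> r" unfolding r_def using g by simp
    thus ?thesis using True by simp
  next
    case False
    have "x1 - m = (1 / r) *\<^sub>R (x2 - m)" using d2 r0 by simp
    hence "x1 = m + (1 / r) *\<^sub>R (x2 - m)" by (simp add: algebra_simps)
    hence "l x1 \<le> (1 / r) * l x2" using l_ray(2)[OF x2, of "1 / r"] r0 False by simp
    also have "\<dots> \<le> l x2"
    proof -
      have "l x2 * 1 \<le> l x2 * r" using False l_nonneg[OF x2] by (intro mult_left_mono) auto
      thus ?thesis using r0 by (simp add: pos_divide_le_eq)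
    qed
    finally have "g1 \<le> g2" unfolding g1_def g2_def by (rule gamma_mono)
    hence "r \<le> 1" unfolding r_def using g by simp
    thus ?thesis using False by simp
  qed
  thus "x1 = x2" using d2 by simp
qed

lemma fixed: "{\<theta> \<in> Th. hC X n \<theta> = \<theta>} = {m}"
proof
  show "{m} \<subseteq> {\<theta> \<in> Th. hC X n \<theta> = \<theta>}" using m_in_Th by (simp add: hC_eq)
  show "{\<theta> \<in> Th. hC X n \<theta> = \<theta>} \<subseteq> {m}"
  proof
    fix \<theta> assume "\<theta> \<in> {\<theta> \<in> Th. hC X n \<theta> = \<theta>}"
    hence th: "\<theta> \<in> Th" and fx: "hC X n \<theta> = \<theta>" by auto
    show "\<theta> \<in> {m}"
    proof (rule ccontr)
      assume "\<theta> \<notin> {m}"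
      hence ne: "\<theta> \<noteq> m" by simp
      have "gamma_EL n (l \<theta>) *\<^sub>R (\<theta> - m) = 1 *\<^sub>R (\<theta> - m)" using fx by (simp add: hC_eq algebra_simps)
      hence "gamma_EL n (l \<theta>) = 1" using ne by (metis eq_iff_diff_eq_0 scaleR_cancel_right)
      hence "l \<theta> = 0" using npos by (simp add: gamma_EL_def)
      hence "ln (R \<theta>) = 0" by (simp add: EL_logratio_def)
      hence "R \<theta> = 1" using R_pos[OF th] by simp
      moreover have "R \<theta> < 1" using R_lt1[OF _ ne] th Th_sub by blast
      ultimately show False by simp
    qed
  qed
qed

end

theorem theorem1:
  fixes X :: "nat \<Rightarrow> 'a::euclidean_space" and n :: nat
  assumes "n > DIM('a)"
    and "Theta_n X n \<noteq> {}"
  shows "{\<theta> \<in> Theta_n X n. hC X n \<theta> = \<theta>} = {sample_mean X n} \<and>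
         (\<forall>\<tau>\<ge>0. \<forall>\<theta>\<in>Theta_n X n. EL_logratio X n \<theta> = \<tau> \<longrightarrow>
           hC X n \<theta> = sample_mean X n + gamma_EL n \<tau> *\<^sub>R (\<theta> - sample_mean X n)) \<and>
         bij_betw (hC X n) (Theta_n X n) UNIV"
proof -
  interpret EL X n
    using assms by unfold_locales auto
  have "y \<in> hC X n ` Theta_n X n" for y
  proof -
    obtain \<theta> where "\<theta> \<in> Theta_n X n" "hC X n \<theta> = y" using surj_hC by blast
    thus ?thesis by blast
  qed
  hence "hC X n ` Theta_n X n = UNIV" by blast
  hence "bij_betw (hC X n) (Theta_n X n) UNIV" using inj_hC by (simp add: bij_betw_def)
  moreover have "(\<forall>\<tau>\<ge>0. \<forall>\<theta>\<in>Theta_n X n. EL_logratio X n \<theta> = \<tau> \<longrightarrow>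
           hC X n \<theta> = sample_mean X n + gamma_EL n \<tau> *\<^sub>R (\<theta> - sample_mean X n))"
    by (simp add: hC_def)
  ultimately show ?thesis using fixed by blast
qed



end
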